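(* Run the ECP algorithm with budget $n$ on a Lipschitz function $f$. Let $$v=\left\lceil\frac{1}{d}\log_{\tau_{n,d}}\!\left(\frac{2n(\sqrt{\pi}\,\Delta)^d}{\varepsilon_1^d\,\Gamma(d/2+1)\,\lambda(\mathcal{X})}\right)\right\rceil,$$ which depends only on $n$, $d$ (and the fixed problem/algorithm constants), not on the iteration $t$. Then in any iteration $t\in\{1,\dots,n\}$, once $\varepsilon_t$ has been increased $v$ times by the growth condition within that iteration, a candidate drawn uniformly from $\mathcal{X}$ is accepted with probability at least $1/2$.
   Context: Setting: $\mathcal{X}\subset\mathbb{R}^d$ is convex, compact with non-empty interior; $f:\mathcal{X}\to\mathbb{R}$ is Lipschitz. $\Delta=\max_{\mathcal{X}}f-\min_{\mathcal{X}}f$, $\lambda$ is Lebesgue measure, $\Gamma$ the Gamma function. For evaluated points $x_1,\dots,x_t$ and $\varepsilon>0$, $\mathcal{A}_{\varepsilon,t}=\{x\in\mathcal{X}: \min_{i\le t}(f(x_i)+\varepsilon\|x-x_i\|_2)\ge\max_{j\le t}f(x_j)\}$. ECP algorithm. Inputs: budget $n\in\mathbb{N}^\star$, $\varepsilon_1>0$, a coefficient $\tau_{n,d}>1$ (a non-decreasing function of $n$ and $d$), a constant $C>1$. Draw $x_1\sim\mathcal{U}(\mathcal{X})$ and evaluate $f(x_1)$; set $t=1$, $h_1=1$, $h_2=0$. While $t<n$: draw a fresh candidate $x_{t+1}\sim\mathcal{U}(\mathcal{X})$ and set $h_{t+1}\leftarrow h_{t+1}+1$; if $h_{t+1}-h_t>C$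 (growth condition), set $\varepsilon_t\leftarrow\tau_{n,d}\varepsilon_t$ and $h_{t+1}\leftarrow0$; if $x_{t+1}\in\mathcal{A}_{\varepsilon_t,t}$ (acceptance condition), evaluate $f(x_{t+1})$, set $t\leftarrow t+1$, then $h_t\leftarrow h_{t+1}$, $\varepsilon_{t+1}\leftarrow\tau_{n,d}\varepsilon_t$, $h_{t+1}\leftarrow0$. Output $x_{\hat i}$ with $\hat i\in\arg\max_{i\le n}f(x_i)$. "Iteration $t$" is the phase in which the algorithm seeks $x_{t+1}$, with current parameter $\varepsilon_t$. *)

theory Defs
  imports "HOL-Analysis.Analysis"
begin

definition ecp_acc_set :: "('a::euclidean_space \<Rightarrow> real) \<Rightarrow> 'a set \<Rightarrow> real \<Rightarrow> 'a list \<Rightarrow> 'a set" where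
  "ecp_acc_set f X eps xs =
     {x \<in> X. Min ((\<lambda>y. f y + eps * norm (x - y)) ` set xs) \<ge> Max (f ` set xs)}"

text \<open>Algorithm state at the top of the while loop:
  (evaluated points x_1..x_t, current eps_t, h_t, h_{t+1}, number of growth increases
   of eps_t performed so far within the current iteration t).\<close>
type_synonym 'a ecp_state = "'a list \<times> real \<times> nat \<times> nat \<times> nat"

text \<open>Counter update and growth condition (deterministic part of one loop pass;
  the fresh candidate is independent of it).\<close>
definition ecp_growth :: "real \<Rightarrow> real \<Rightarrow> 'a ecp_state \<Rightarrow> 'a ecp_state" where
  "ecp_growth C tau = (\<lambda>(xs, e, hp, hc, g).
     if real (hc + 1) - real hp > C then (xs, tau * e, hp, 0, g + 1)
     else (xs, e, hp, hc + 1, g))"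

inductive ecp_loop_state ::
  "('a::euclidean_space \<Rightarrow> real) \<Rightarrow> 'a set \<Rightarrow> nat \<Rightarrow> real \<Rightarrow> real \<Rightarrow> real \<Rightarrow> 'a ecp_state \<Rightarrow> bool"
  for f X n eps1 tau C where
  init: "x1 \<in> X \<Longrightarrow> ecp_loop_state f X n eps1 tau C ([x1], eps1, 1, 0, 0)"
| accept: "\<lbrakk> ecp_loop_state f X n eps1 tau C s; length (fst s) < n;
             ecp_growth C tau s = (xs, e, hp, hc, g); y \<in> X; y \<in> ecp_acc_set f X e xs \<rbrakk>
           \<Longrightarrow> ecp_loop_state f X n eps1 tau C (xs @ [y], tau * e, hc, 0, 0)"
| reject: "\<lbrakk> ecp_loop_state f X n eps1 tau C s; length (fst s) < n;
             ecp_growth C tau s = (xs, e, hp, hc, g); y \<in> X; y \<notin> ecp_acc_set f X e xs \<rbrakk>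
           \<Longrightarrow> ecp_loop_state f X n eps1 tau C (xs, e, hp, hc, g)"

end

theory Submission
  imports Defs
begin

definition ecp_inv :: "'a::euclidean_space set \<Rightarrow> real \<Rightarrow> real \<Rightarrow> 'a ecp_state \<Rightarrow> bool" where
  "ecp_inv X eps1 tau = (\<lambda>(xs, e, hp, hc, g). xs \<noteq> [] \<and> set xs \<subseteq> X \<and> e \<ge> eps1 * tau ^ g)"

lemma growth_inv:
  assumes "ecp_inv X eps1 tau s" "tau > 1" "eps1 > 0"
  shows "ecp_inv X eps1 tau (ecp_growth C tau s)"
proof -
  obtain xs e hp hc g where s: "s = (xs, e, hp, hc, g)" by (cases s) auto
  have "tau * (eps1 * tau ^ g) \<le> tau * e" if "e \<ge> eps1 * tau ^ g"
    using that assms by (intro mult_left_mono) auto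
  then show ?thesis using assms unfolding s ecp_inv_def ecp_growth_def
    by (auto simp: algebra_simps)
qed

lemma loop_inv:
  assumes "ecp_loop_state f X n eps1 tau C s" "tau > 1" "eps1 > 0"
  shows "ecp_inv X eps1 tau s"
  using assms(1)
proof induction
  case (init x1)
  then show ?case by (simp add: ecp_inv_def)
next
  case (accept s xs e hp hc g y)
  have "ecp_inv X eps1 tau (xs, e, hp, hc, g)"
    using growth_inv[OF accept.IH assms(2,3), of C] accept by metis
  then have h: "xs \<noteq> []" "set xs \<subseteq> X" "e \<ge> eps1 * tau ^ g" by (auto simp: ecp_inv_def)
  have "eps1 \<le> eps1 * tau ^ g" using assms by simp
  also have "\<dots> \<le> e" by fact
  finally have ee: "eps1 \<le> e" .
  have "eps1 \<le> tau * e" using assms ee by (smt (verit) mult_le_cancel_right1)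
  then show ?case using h accept by (simp add: ecp_inv_def)
next
  case (reject s xs e hp hc g y)
  then show ?case using growth_inv[OF reject.IH assms(2,3), of C] reject by metis
qed

lemma key_ineq:
  fixes d n g :: nat and T eps1 Gm lam D e :: real
  assumes d: "d \<ge> 1" and T: "T > 1" and eps: "eps1 > 0" and Gm: "Gm > 0" and lam: "lam > 0"
    and D: "D \<ge> 0" and n: "n \<ge> 1" and e: "e \<ge> eps1 * T ^ g"
    and g: "int g \<ge> \<lceil>(1 / real d) * log T
           (2 * real n * (sqrt pi * D) ^ d / (eps1 ^ d * Gm * lam))\<rceil>"
  shows "real n * (pi powr (real d / 2) / Gm * (D / e) ^ d) \<le> lam / 2"
proof (cases "D = 0")
  case True
  then show ?thesis using d lam by (simp add: zero_power)
next
  case False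
  then have Dp: "D > 0" using D by simp
  define A where "A = 2 * real n * (sqrt pi * D) ^ d / (eps1 ^ d * Gm * lam)"
  have Ap: "A > 0" unfolding A_def using Dp n eps Gm lam by (intro divide_pos_pos) auto
  have "(1 / real d) * log T A \<le> real g"
  proof -
    have "real_of_int \<lceil>(1 / real d) * log T A\<rceil> \<le> real_of_int (int g)"
      using g unfolding A_def by (simp only: of_int_le_iff)
    then show ?thesis using le_of_int_ceiling[of "(1 / real d) * log T A"] by linarith
  qed
  then have "log T A \<le> real d * real g" using d
    by (simp add: divide_le_eq mult.commute)
  then have "A \<le> T powr (real d * real g)" using log_le_iff[OF T Ap] by simp
  also have "T powr (real d * real g) = (T ^ g) ^ d"
  proof -
    have "T powr (real d * real g) = T powr (real (g * d))" by (simp add: mult.commute)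
    also have "\<dots> = T ^ (g * d)" using T by (simp only: powr_realpow)
    finally show ?thesis by (simp add: power_mult)
  qed
  finally have A1: "A \<le> (T ^ g) ^ d" .
  have ep: "e > 0" using e eps T by (smt (verit) mult_pos_pos zero_less_power)
  have "eps1 ^ d * A \<le> eps1 ^ d * (T ^ g) ^ d" using A1 eps by simp
  also have "\<dots> = (eps1 * T ^ g) ^ d" by (simp add: power_mult_distrib)
  also have "\<dots> \<le> e ^ d" using e eps T by (intro power_mono) auto
  finally have E: "eps1 ^ d * A \<le> e ^ d" .
  have "eps1 ^ d * A = 2 * real n * (sqrt pi * D) ^ d / (Gm * lam)"
    unfolding A_def using eps by simp
  also have "(sqrt pi * D) ^ d = pi powr (real d / 2) * D ^ d"
  proof -
    have "sqrt pi ^ d = (pi powr (1/2)) ^ d" by (simp add: powr_half_sqrt)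
    also have "\<dots> = (pi powr (1/2)) powr (real d)" by (rule powr_realpow[symmetric]) simp
    also have "\<dots> = pi powr (real d / 2)" by (simp add: powr_powr)
    finally show ?thesis by (simp add: power_mult_distrib)
  qed
  finally have "2 * real n * (pi powr (real d / 2) * D ^ d) / (Gm * lam) \<le> e ^ d" using E by simp
  then have "2 * real n * (pi powr (real d / 2) * D ^ d) \<le> e ^ d * (Gm * lam)"
    using Gm lam by (simp add: divide_le_eq)
  then have "real n * (pi powr (real d / 2) * D ^ d) \<le> lam / 2 * (Gm * e ^ d)" by (simp add: algebra_simps)
  moreover have "real n * (pi powr (real d / 2) / Gm * (D / e) ^ d)
      = real n * (pi powr (real d / 2) * D ^ d) / (Gm * e ^ d)"
    by (simp add: power_divide)
  moreover have "Gm * e ^ d > 0" using Gm ep by simp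
  ultimately show ?thesis by (simp add: divide_le_eq)
qed

theorem corollary1:
  fixes f :: "'a::euclidean_space \<Rightarrow> real" and X :: "'a set"
    and n :: nat and eps1 C :: real and tau :: "nat \<Rightarrow> nat \<Rightarrow> real"
    and s :: "'a ecp_state" and xs :: "'a list" and e :: real and hp hc g :: nat
  assumes "convex X" and "compact X" and "interior X \<noteq> {}"
    and "\<exists>L. L-lipschitz_on X f"
    and "n \<ge> 1" and "eps1 > 0" and "C > 1"
    and "\<forall>m k. tau m k > 1"
    and "\<forall>m m' k k'. m \<le> m' \<longrightarrow> k \<le> k' \<longrightarrow> tau m k \<le> tau m' k'"
    and "ecp_loop_state f X n eps1 (tau n DIM('a)) C s"
    and "length (fst s) < n"
    and "ecp_growth C (tau n DIM('a)) s = (xs, e, hp, hc, g)"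
    and "int g \<ge> \<lceil>(1 / real DIM('a)) * log (tau n DIM('a))
           (2 * real n * (sqrt pi * ((SUP x\<in>X. f x) - (INF x\<in>X. f x))) ^ DIM('a)
            / (eps1 ^ DIM('a) * Gamma (real DIM('a) / 2 + 1) * measure lborel X))\<rceil>"
  shows "measure (uniform_measure lborel X) (ecp_acc_set f X e xs) \<ge> 1 / 2"
proof -
  define d where "d = DIM('a)"
  define T where "T = tau n DIM('a)"
  have T: "T > 1" using assms(8) unfolding T_def by simp
  have eps: "eps1 > 0" by fact
  have "ecp_inv X eps1 T s" using loop_inv[OF assms(10)[folded T_def] T eps] .
  then have "ecp_inv X eps1 T (xs, e, hp, hc, g)"
    using growth_inv[OF _ T eps, of X s C] assms(12)[folded T_def] by metis
  then have xsne: "xs \<noteq> []" and xsX: "set xs \<subseteq> X" and e: "e \<ge> eps1 * T ^ g"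
    by (auto simp: ecp_inv_def)
  have ep: "e > 0" using e eps T by (smt (verit) mult_pos_pos zero_less_power)
  obtain L where "L-lipschitz_on X f" using assms(4) by blast
  then have cont: "continuous_on X f" using lipschitz_on_continuous_on by blast
  have "compact (f ` X)" using compact_continuous_image[OF cont assms(2)] .
  then have bdd: "bounded (f ` X)" by (rule compact_imp_bounded)
  define Sp where "Sp = (SUP x\<in>X. f x)"
  define If where "If = (INF x\<in>X. f x)"
  define M where "M = Max (f ` set xs)"
  have fin: "finite (f ` set xs)" "f ` set xs \<noteq> {}" using xsne by auto
  have "M \<in> f ` set xs" unfolding M_def using Max_in[OF fin] .
  then obtain z where z: "z \<in> set xs" "M = f z" by blast
  have MSp: "M \<le> Sp" unfolding Sp_def z(2)
    using z(1) xsX bdd by (intro cSUP_upper) (auto intro: bounded_imp_bdd_above)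
  have Ify: "If \<le> f y" if "y \<in> set xs" for y unfolding If_def
    using that xsX bdd by (intro cINF_lower) (auto intro: bounded_imp_bdd_below)
  define D where "D = Sp - If"
  have D: "D \<ge> 0" using MSp Ify[OF z(1)] z(2) unfolding D_def by simp
  define U where "U = (\<Union>y\<in>set xs. ball y ((M - f y) / e))"
  have accU: "ecp_acc_set f X e xs = X - U"
  proof -
    have "Min ((\<lambda>y. f y + e * norm (x - y)) ` set xs) \<ge> Max (f ` set xs) \<longleftrightarrow> x \<notin> U" for x
    proof -
      have "Min ((\<lambda>y. f y + e * norm (x - y)) ` set xs) \<ge> M \<longleftrightarrow>
            (\<forall>y\<in>set xs. f y + e * norm (x - y) \<ge> M)"
        using xsne by (subst Min_ge_iff) auto
      also have "\<dots> \<longleftrightarrow> x \<notin> U"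
      proof -
        have "f y + e * norm (x - y) \<ge> M \<longleftrightarrow> \<not> dist y x < (M - f y) / e" for y
          using ep by (simp add: dist_norm norm_minus_commute pos_less_divide_eq algebra_simps not_less)
        then show ?thesis unfolding U_def by auto
      qed
      finally show ?thesis unfolding M_def .
    qed
    then show ?thesis unfolding ecp_acc_set_def by auto
  qed
  have Xf: "X \<in> fmeasurable lborel" using fmeasurable_compact[OF assms(2)] .
  have Usets: "U \<in> sets lborel" unfolding U_def sets_lborel by (intro borel_open open_UN) auto
  define lam where "lam = measure lborel X"
  have lam: "lam > 0"
  proof -
    obtain x where "x \<in> interior X" using assms(3) by blast
    then obtain r where r: "r > 0" "ball x r \<subseteq> X" using mem_interior
      by blast
    have "measure lborel (ball x r) \<le> lam" unfolding lam_def
      using r Xf by (intro measure_mono_fmeasurable) auto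
    moreover have "measure lborel (ball x r) > 0" using r by (simp add: content_ball)
    ultimately show ?thesis by linarith
  qed
  have em: "emeasure lborel X \<noteq> 0" "emeasure lborel X \<noteq> \<infinity>"
    using lam Xf unfolding lam_def by (auto simp: measure_def fmeasurable_def)
  have accsets: "ecp_acc_set f X e xs \<in> sets lborel" using accU Xf Usets by auto
  have meq: "measure (uniform_measure lborel X) (ecp_acc_set f X e xs) = measure lborel (X - (X \<inter> U)) / lam"
  proof -
    have "X \<inter> ecp_acc_set f X e xs = X - (X \<inter> U)" using accU by auto
    then show ?thesis using measure_uniform_measure[OF em accsets] unfolding lam_def by simp
  qed
  have mdiff: "measure lborel (X - (X \<inter> U)) = lam - measure lborel (X \<inter> U)"
    unfolding lam_def using em Xf Usets by (intro measure_Diff) auto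
  define V where "V = unit_ball_vol (real d) * (D / e) ^ d"
  have XU: "X \<inter> U = (\<Union>y\<in>set xs. X \<inter> ball y ((M - f y) / e))" unfolding U_def by auto
  have "measure lborel (X \<inter> U) \<le> (\<Sum>y\<in>set xs. measure lborel (X \<inter> ball y ((M - f y) / e)))"
    unfolding XU using Xf by (intro measure_UNION_le) auto
  also have "\<dots> \<le> (\<Sum>y\<in>set xs. V)"
  proof (intro sum_mono)
    fix y assume y: "y \<in> set xs"
    have "(M - f y) / e \<le> D / e" using MSp Ify[OF y] ep unfolding D_def
      by (intro divide_right_mono) auto
    then have "X \<inter> ball y ((M - f y) / e) \<subseteq> cball y (D / e)" by auto
    then have "measure lborel (X \<inter> ball y ((M - f y) / e)) \<le> measure lborel (cball y (D / e))"
      using Xf by (intro measure_mono_fmeasurable fmeasurable_compact) auto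
    also have "\<dots> = V" unfolding V_def d_def using D ep by (subst content_cball) auto
    finally show "measure lborel (X \<inter> ball y ((M - f y) / e)) \<le> V" .
  qed
  also have "\<dots> = real (card (set xs)) * V" by simp
  also have "\<dots> \<le> real n * V"
  proof (intro mult_right_mono)
    have "card (set xs) \<le> length xs" by (rule card_length)
    also have "length xs < n" using assms(11,12) unfolding ecp_growth_def
      by (cases s) (auto split: if_splits)
    finally show "real (card (set xs)) \<le> real n" by simp
    show "V \<ge> 0" unfolding V_def using D ep by simp
  qed
  also have "\<dots> \<le> lam / 2"
  proof -
    have d1: "1 \<le> DIM('a)" using DIM_positive[where 'a='a] by linarith
    have Gm: "Gamma (real DIM('a) / 2 + 1) > 0" by (intro Gamma_real_pos) simp
    have "real n * (pi powr (real DIM('a) / 2) / Gamma (real DIM('a) / 2 + 1) * (D / e) ^ DIM('a)) \<le> lam / 2"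
      unfolding lam_def D_def Sp_def If_def
      using key_ineq[OF d1 T eps Gm lam[unfolded lam_def] D[unfolded D_def Sp_def If_def] assms(5) e assms(13)[folded T_def]] .
    then show ?thesis unfolding V_def d_def unit_ball_vol_def by simp
  qed
  finally have "measure lborel (X \<inter> U) \<le> lam / 2" .
  then show ?thesis unfolding meq mdiff using lam by (simp add: le_divide_eq)
qed

end
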